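(* Let $\zeta_3=\int_0^\infty \frac{\mathrm{d}t}{\sqrt{1+t^6}}$ and let $\mathrm{sleafh}_3:(-\zeta_3,\zeta_3)\to\mathbb{R}$ be the hyperbolic leaf function of basis $3$. For every real $l$ with $2l\in(-\zeta_3,\zeta_3)$, $$\mathrm{sleafh}_3(2l)=\frac{2\,\mathrm{sleafh}_3(l)\sqrt{1+(\mathrm{sleafh}_3(l))^6}}{\sqrt{1-8(\mathrm{sleafh}_3(l))^6}}.$$
   Context: For a natural number $n$, let $\zeta_n=\int_0^\infty \frac{\mathrm{d}t}{\sqrt{1+t^{2n}}}$. The hyperbolic leaf function $\mathrm{sleafh}_n$ is the solution $r(l)$ on $(-\zeta_n,\zeta_n)$ of $\frac{\mathrm{d}^2r}{\mathrm{d}l^2}=n\,r^{2n-1}$ with $r(0)=0$, $r'(0)=1$; equivalently it is the inverse function of $r\mapsto \int_0^r \frac{\mathrm{d}t}{\sqrt{1+t^{2n}}}$, $r\in\mathbb{R}$. *)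

theory Defs
  imports "HOL-Analysis.Analysis"
begin

definition zeta :: "nat \<Rightarrow> real" where
  "zeta n = integral {0..} (\<lambda>t. 1 / sqrt (1 + t ^ (2 * n)))"

definition leafh_arc :: "nat \<Rightarrow> real \<Rightarrow> real" where
  "leafh_arc n r = (if 0 \<le> r then integral {0..r} (\<lambda>t. 1 / sqrt (1 + t ^ (2 * n)))
                    else - integral {r..0} (\<lambda>t. 1 / sqrt (1 + t ^ (2 * n))))"

text \<open>sleafh_n is the inverse function of leafh_arc n (meaningful on (-zeta n, zeta n)).\<close>
definition sleafh :: "nat \<Rightarrow> real \<Rightarrow> real" where
  "sleafh n l = (THE r. leafh_arc n r = l)"

end

theory Submission imports Defs begin

definition f0 :: "real \<Rightarrow> real" where "f0 t = 1 / sqrt (1 + t ^ 6)"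

lemma pos6: "1 + (t::real)^6 > 0" by (simp add: add_pos_nonneg zero_le_even_power)
lemma ne6: "1 + (t::real)^6 \<noteq> 0" using pos6[of t] by linarith

lemma f0_pos: "f0 t > 0"
  unfolding f0_def by (simp add: add_pos_nonneg zero_le_even_power)

lemma f0_cont: "continuous_on S f0"
  unfolding f0_def by (intro continuous_intros) (auto simp: ne6)

lemma arc_eq: "leafh_arc 3 r = (if 0 \<le> r then integral {0..r} f0 else - integral {r..0} f0)"
  unfolding leafh_arc_def f0_def by simp

lemma arc_deriv: "(leafh_arc 3 has_real_derivative f0 x) (at x)"
proof -
  define M where "M = \<bar>x\<bar> + 1"
  define \<Phi> where "\<Phi> y = integral {-M..y} f0" for y
  have int: "f0 integrable_on {a..b}" for a b by (intro integrable_continuous_interval f0_cont)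
  have eq: "leafh_arc 3 y = \<Phi> y - \<Phi> 0" if "y \<in> {-M<..<M}" for y
  proof (cases "0 \<le> y")
    case True
    have "-M \<le> 0" by (simp add: M_def)
    from Henstock_Kurzweil_Integration.integral_combine[OF this True int]
    show ?thesis using True by (simp add: arc_eq \<Phi>_def)
  next
    case False
    have "-M \<le> y" "y \<le> 0" using that False by auto
    from Henstock_Kurzweil_Integration.integral_combine[OF this int]
    show ?thesis using False by (simp add: arc_eq \<Phi>_def)
  qed
  have "(\<Phi> has_real_derivative f0 x) (at x within {-M..M})"
    unfolding \<Phi>_def by (rule integral_has_real_derivative) (auto simp: f0_cont M_def)
  moreover have "at x within {-M..M} = at x"
    by (rule at_within_interior) (auto simp: M_def)
  ultimately have "(\<Phi> has_real_derivative f0 x) (at x)" by simp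
  then have "((\<lambda>y. \<Phi> y - \<Phi> 0) has_real_derivative f0 x) (at x)"
    by (auto intro!: derivative_eq_intros)
  then show ?thesis
    by (rule has_field_derivative_transform_within_open[of _ _ _ "{-M<..<M}"])
       (auto simp: eq M_def)
qed

lemma arc_cont: "continuous_on S (leafh_arc 3)"
  by (intro continuous_at_imp_continuous_on ballI DERIV_isCont[OF arc_deriv])

lemma arc_mono: "x < y \<Longrightarrow> leafh_arc 3 x < leafh_arc 3 y"
  by (rule DERIV_pos_imp_increasing) (auto intro: arc_deriv f0_pos)

lemma arc_le: "x \<le> y \<Longrightarrow> leafh_arc 3 x \<le> leafh_arc 3 y"
  using arc_mono by (cases "x = y") (auto simp: less_imp_le)

lemma arc_inj: "leafh_arc 3 x = leafh_arc 3 y \<Longrightarrow> x = y"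
  by (metis arc_mono less_irrefl linorder_cases)

lemma arc_0: "leafh_arc 3 0 = 0" by (simp add: arc_eq)

lemma f0_even: "f0 (-x) = f0 x" by (simp add: f0_def)

lemma arc_odd: "leafh_arc 3 (-x) = - leafh_arc 3 x"
proof -
  have "\<forall>y. ((\<lambda>x. leafh_arc 3 (-x) + leafh_arc 3 x) has_real_derivative 0) (at y)"
  proof
    fix y
    show "((\<lambda>x. leafh_arc 3 (-x) + leafh_arc 3 x) has_real_derivative 0) (at y)"
    proof -
      have "((\<lambda>x. leafh_arc 3 (-x)) has_real_derivative f0 (-y) * (-1)) (at y)"
        by (rule DERIV_chain2[where f="leafh_arc 3" and g=uminus]) (auto intro!: arc_deriv derivative_eq_intros)
      then show ?thesis using arc_deriv[of y]
        by (auto intro!: derivative_eq_intros simp: f0_even)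
    qed
  qed
  from DERIV_isconst_all[OF this, of x 0] show ?thesis by (simp add: arc_0)
qed

lemma zeta_le:
  assumes "\<And>r. 0 \<le> r \<Longrightarrow> leafh_arc 3 r \<le> B"
  shows "zeta 3 \<le> B"
proof -
  define g where "g k x = (if x \<in> {0..real k} then f0 x else 0)" for k :: nat and x
  have zeq: "zeta 3 = integral {0..} f0" unfolding zeta_def f0_def by simp
  have ig: "integral {0..} (g k) = leafh_arc 3 (real k)" for k
    unfolding g_def Henstock_Kurzweil_Integration.integral_restrict_Int arc_eq
    by (simp add: Int_absorb1 Int_commute)
  have "f0 integrable_on {0..} \<and> ((\<lambda>k. integral {0..} (g k)) \<longlonglongrightarrow> integral {0..} f0)"
  proof (rule monotone_convergence_increasing)
    show "g k integrable_on {0..}" for k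
      unfolding g_def integrable_restrict_Int
      by (simp add: Int_absorb1 Int_commute integrable_continuous_interval f0_cont)
    show "g k x \<le> g (Suc k) x" if "x \<in> {0..}" for k x
      using that f0_pos[of x] by (auto simp: g_def less_imp_le)
    show "(\<lambda>k. g k x) \<longlonglongrightarrow> f0 x" if "x \<in> {0..}" for x
    proof -
      obtain N :: nat where "x \<le> real N" using real_arch_simple by blast
      then have "\<forall>k\<ge>N. g k x = f0 x" using that by (auto simp: g_def)
      then show ?thesis by (intro tendsto_eventually) (auto simp: eventually_sequentially)
    qed
    show "bounded (range (\<lambda>k. integral {0..} (g k)))"
    proof -
      have "\<bar>leafh_arc 3 (real k)\<bar> \<le> B" for k
        using assms[of "real k"] arc_le[of 0 "real k"] arc_0 by auto
      then show ?thesis unfolding ig bounded_iff by auto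
    qed
  qed
  then have "(\<lambda>k. leafh_arc 3 (real k)) \<longlonglongrightarrow> zeta 3" by (simp add: ig zeq)
  then show ?thesis
    by (rule LIMSEQ_le_const2) (use assms in auto)
qed


definition G :: "real \<Rightarrow> real" where "G s = 2 * s * sqrt (1 + s^6) / sqrt (1 - 8 * s^6)"

lemma G_deriv:
  assumes "8 * x^6 < 1"
  shows "(G has_real_derivative 2 * (1 + 20 * x^6 - 8 * (x^6)^2)/(sqrt (1 + x^6) * sqrt (1 - 8 * x^6) ^ 3)) (at x)"
proof -
  define a where "a = sqrt (1 + x^6)"
  define b where "b = sqrt (1 - 8 * x^6)"
  have a0: "a > 0" using pos6[of x] by (simp add: a_def)
  have b0: "b > 0" using assms by (simp add: b_def)
  have a2: "a^2 = 1 + x^6" using pos6[of x] by (simp add: a_def)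
  have b2: "b^2 = 1 - 8 * x^6" using assms by (simp add: b_def)
  have x6a: "x^5 * x = x^6" by (subst power_Suc2[symmetric]) simp
  have x6: "x^5 * x = x^6" "x * x^5 = x^6" using x6a by (auto simp: mult.commute)
  have "(G has_real_derivative ((2 * a + 6 * (x ^ 5 * (inverse a * x))) * b + 48 * (x * (a * (x ^ 5 * inverse b)))) / (1 - 8 * x ^ 6)) (at x)"
    unfolding G_def a_def b_def using assms pos6[of x] by (auto intro!: derivative_eq_intros)
  moreover have "((2 * a + 6 * (x ^ 5 * (inverse a * x))) * b + 48 * (x * (a * (x ^ 5 * inverse b)))) / (1 - 8 * x ^ 6)
     = ((2 * a^2 + 6 * x^6) * b^2 + 48 * x^6 * a^2) / (a * b^3)"
    unfolding b2[symmetric] using a0 b0 x6 by (simp add: field_simps power2_eq_square power3_eq_cube)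
  moreover have "((2 * a^2 + 6 * x^6) * b^2 + 48 * x^6 * a^2) = 2 * (1 + 20 * x^6 - 8 * (x^6)^2)"
    unfolding a2 b2 by (simp add: algebra_simps power2_eq_square)
  ultimately show ?thesis by (simp add: a_def b_def)
qed


lemma key:
  assumes "8 * x^6 < 1"
  shows "f0 (G x) * (2 * (1 + 20 * x^6 - 8 * (x^6)^2)/(sqrt (1 + x^6) * sqrt (1 - 8 * x^6) ^ 3)) = 2 * f0 x"
proof -
  define u where "u = x^6"
  define a where "a = sqrt (1 + u)"
  define b where "b = sqrt (1 - 8 * u)"
  define P where "P = 1 + 20 * u - 8 * u^2"
  have u0: "u \<ge> 0" by (simp add: u_def zero_le_even_power)
  have u1: "8 * u < 1" using assms by (simp add: u_def)
  have a0: "a > 0" using u0 by (simp add: a_def)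
  have b0: "b > 0" using u1 by (simp add: b_def)
  have a2: "a^2 = 1 + u" using u0 by (simp add: a_def)
  have b2: "b^2 = 1 - 8 * u" using u1 by (simp add: b_def)
  have "u * (8 * u) \<le> u * 1" using u0 u1 by (intro mult_left_mono) auto
  then have P0: "P > 0" unfolding P_def using u0 by (simp add: power2_eq_square)
  have G: "G x = 2 * x * a / b" by (simp add: G_def a_def b_def u_def)
  have "G x ^ 6 = 64 * x^6 * (a^2)^3 / (b^2)^3"
    unfolding G by (simp add: power_divide power_mult_distrib flip: power_mult)
  also have "\<dots> = 64 * u * (1 + u)^3 / (1 - 8*u)^3" by (simp add: a2 b2 u_def)
  finally have G6: "G x ^ 6 = 64 * u * (1 + u)^3 / (1 - 8*u)^3" .
  have "1 + G x ^ 6 = (P / b^3)^2"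
  proof -
    have "(P / b^3)^2 = P^2 / (b^2)^3" by (simp add: power_divide flip: power_mult)
    also have "\<dots> = P^2 / (1 - 8*u)^3" by (simp add: b2)
    finally have e: "(P / b^3)^2 = P^2 / (1 - 8*u)^3" .
    have ne: "(1 - 8*u)^3 \<noteq> 0" using u1 by simp
    show ?thesis unfolding e G6 using ne
      by (simp add: field_simps P_def) (simp add: algebra_simps power2_eq_square power3_eq_cube)
  qed
  then have "sqrt (1 + G x ^ 6) = P / b^3"
    by (intro real_sqrt_unique) (use P0 b0 in auto)
  then have fG: "f0 (G x) = b^3 / P" by (simp add: f0_def)
  show ?thesis
    unfolding fG unfolding f0_def u_def[symmetric] a_def[symmetric] b_def[symmetric] P_def[symmetric]
    using P0 a0 b0 by (simp add: field_simps)
qed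

definition c :: real where "c = root 6 (1/8)"

lemma c_pos: "c > 0" by (simp add: c_def)

lemma in_c: "\<bar>s\<bar> < c \<longleftrightarrow> 8 * s^6 < 1"
proof -
  have "\<bar>s\<bar> = root 6 (\<bar>s\<bar>^6)" by (rule real_root_power_cancel[symmetric]) auto
  then have "\<bar>s\<bar> < c \<longleftrightarrow> \<bar>s\<bar>^6 < 1/8" unfolding c_def
    by (metis real_root_less_iff zero_less_numeral)
  also have "\<bar>s\<bar>^6 = s^6" by (simp add: power_even_abs)
  finally show ?thesis by linarith
qed

lemma FG:
  assumes "8 * s^6 < 1"
  shows "leafh_arc 3 (G s) = 2 * leafh_arc 3 s"
proof -
  have d: "((\<lambda>x. leafh_arc 3 (G x) - 2 * leafh_arc 3 x) has_real_derivative 0) (at x)"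
    if "x \<in> {-c<..<c}" for x
  proof -
    from that have x: "8 * x^6 < 1" using in_c[of x] by auto
    have "((\<lambda>x. leafh_arc 3 (G x)) has_real_derivative
      f0 (G x) * (2 * (1 + 20 * x^6 - 8 * (x^6)^2)/(sqrt (1 + x^6) * sqrt (1 - 8 * x^6) ^ 3))) (at x)"
      by (rule DERIV_chain2[OF arc_deriv G_deriv[OF x]])
    then have "((\<lambda>x. leafh_arc 3 (G x)) has_real_derivative 2 * f0 x) (at x)"
      by (simp only: key[OF x])
    then show ?thesis
      using arc_deriv[of x] by (auto intro!: derivative_eq_intros)
  qed
  have "-c < c" using c_pos by simp
  moreover have "s \<in> {-c<..<c}" using assms in_c[of s] by auto
  moreover have "0 \<in> {-c<..<c}" using c_pos by auto
  ultimately have "(\<lambda>x. leafh_arc 3 (G x) - 2 * leafh_arc 3 x) s = (\<lambda>x. leafh_arc 3 (G x) - 2 * leafh_arc 3 x) 0"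
    using DERIV_isconst3[of "-c" c s 0 "\<lambda>x. leafh_arc 3 (G x) - 2 * leafh_arc 3 x"] d by blast
  then show ?thesis by (simp add: G_def arc_0)
qed


lemma G_big:
  assumes r: "r \<ge> 0"
  shows "\<exists>s\<ge>0. 8 * s^6 < 1 \<and> r \<le> G s"
proof -
  define d where "d = root 6 (1/16)"
  define \<delta> where "\<delta> = min (1/2) ((d/(r+1))^2)"
  define s where "s = root 6 ((1-\<delta>)/8)"
  have d0: "d > 0" by (simp add: d_def)
  have \<delta>0: "\<delta> > 0" using d0 r by (simp add: \<delta>_def)
  have \<delta>1: "\<delta> \<le> 1/2" by (simp add: \<delta>_def)
  have s6: "s^6 = (1-\<delta>)/8" unfolding s_def using \<delta>1 by simp
  have s8: "8 * s^6 < 1" using s6 \<delta>0 by simp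
  have sd: "d \<le> s" unfolding s_def d_def using \<delta>1 by (intro real_root_le_mono) auto
  have s0: "s \<ge> 0" using sd d0 by simp
  define a where "a = sqrt (1 + s^6)"
  define b where "b = sqrt (1 - 8 * s^6)"
  have a1: "a \<ge> 1" unfolding a_def using s0 by simp
  have b_eq: "b = sqrt \<delta>" unfolding b_def s6 by (simp add: field_simps)
  have b0: "b > 0" using \<delta>0 b_eq by simp
  have "b \<le> sqrt ((d/(r+1))^2)" unfolding b_eq \<delta>_def by (rule real_sqrt_le_mono) simp
  also have "\<dots> = d/(r+1)" using d0 r by simp
  finally have bd: "b \<le> d/(r+1)" .
  have G: "G s = 2 * s * a / b" by (simp add: G_def a_def b_def)
  have "2 * s * 1 / b \<le> 2 * s * a / b"
    using a1 s0 b0 by (intro divide_right_mono mult_left_mono) auto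
  moreover have "2 * d / b \<le> 2 * s / b" using sd b0 by (intro divide_right_mono) auto
  moreover have "2 * d / (d/(r+1)) \<le> 2 * d / b"
    using bd b0 d0 r by (intro divide_left_mono) auto
  moreover have "2 * d / (d/(r+1)) = 2 * (r + 1)" using d0 r by (simp add: field_simps)
  ultimately have "2 * (r+1) \<le> G s" unfolding G by simp
  then show ?thesis using s0 s8 r by (intro exI[of _ s]) auto
qed

lemma zeta_c: "zeta 3 \<le> 2 * leafh_arc 3 c"
proof (rule zeta_le)
  fix r :: real assume "0 \<le> r"
  then obtain s where s: "s \<ge> 0" "8 * s^6 < 1" "r \<le> G s" using G_big by blast
  have "leafh_arc 3 r \<le> leafh_arc 3 (G s)" using s by (intro arc_le)
  also have "\<dots> = 2 * leafh_arc 3 s" using FG s by simp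
  also have "\<dots> \<le> 2 * leafh_arc 3 c" using s in_c[of s] by (auto intro: arc_le)
  finally show "leafh_arc 3 r \<le> 2 * leafh_arc 3 c" .
qed

theorem mainTheorem10:
  fixes l :: real
  assumes "- zeta 3 < 2 * l" and "2 * l < zeta 3"
  shows "sleafh 3 (2 * l) =
    2 * sleafh 3 l * sqrt (1 + (sleafh 3 l) ^ 6) / sqrt (1 - 8 * (sleafh 3 l) ^ 6)"
proof -
  have lc: "l < leafh_arc 3 c" "leafh_arc 3 (-c) < l"
    using assms zeta_c arc_odd[of c] by auto
  obtain s where s: "-c \<le> s" "s \<le> c" "leafh_arc 3 s = l"
    using IVT'[of "leafh_arc 3" "-c" l c] lc c_pos arc_cont by force
  have "s \<noteq> c" "s \<noteq> -c" using s lc by auto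
  then have "\<bar>s\<bar> < c" using s by auto
  then have s8: "8 * s^6 < 1" using in_c by blast
  have sl: "sleafh 3 l = s"
    unfolding sleafh_def using s arc_inj by (intro the_equality) auto
  have "leafh_arc 3 (G s) = 2 * l" using FG[OF s8] s by simp
  then have "sleafh 3 (2 * l) = G s"
    unfolding sleafh_def using arc_inj by (intro the_equality) auto
  then show ?thesis by (simp add: sl G_def)
qed

end
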